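(* Let $I=[0,1]$. (i) If $f:I\to I$ is continuous and $(I,f)$ is topologically transitive, then $h_{A}(\hat f)=+\infty$ for any $A\in\mathcal{S}$. (ii) There exists a sequence $f_{0,\infty}=\{f_n\}_{n=0}^\infty$ of continuous self-maps of $I$ such that $(I,f_{0,\infty})$ is topologically transitive and $h_{A}(\hat f_{0,\infty})=0$ for some $A\in\mathcal{S}$.
   Context: $f_0^n=f_{n-1}\circ\cdots\circ f_0$, $f_0^0=\mathrm{id}$; for a single map $f$ take $f_n=f$ for all $n$. $(I,f_{0,\infty})$ is topologically transitive if for any nonempty open $U,V\subset I$ there is $n\ge1$ with $f_0^n(U)\cap V\ne\emptyset$. $\mathcal S$ is the set of strictly increasing sequences $A=\{a_i\}_{i\ge1}$ of nonnegative integers. For a compact metric space $Z$ and continuous self-maps $g_{0,\infty}$, $h_A(g_{0,\infty})=\sup_{\mathscr A}\limsup_{n\to\infty}\frac1n\log\mathcal N(\bigvee_{i=1}^n (g_0^{a_i})^{-1}\mathscr A)$ over finite open covers ($\bigvee$ = common refinement, $\mathcal N$ = minimal cardinality of a subcover). $\mathcal M(I)$ is the space of Borel probability measures on $I$ with the weak$^*$ topology (compact metric, e.g. via the Prohorov metric), and $\hat f_n(\mu)(B)=\mu(f_n^{-1}(B))$. *)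

theory Defs
  imports "HOL-Probability.Probability"
begin

abbreviation unitI :: "real set" where "unitI \<equiv> {0..1}"

fun comp_seq :: "(nat \<Rightarrow> 'a \<Rightarrow> 'a) \<Rightarrow> nat \<Rightarrow> 'a \<Rightarrow> 'a" where
  "comp_seq g 0 = id"
| "comp_seq g (Suc n) = g n \<circ> comp_seq g n"

definition top_transitive :: "(nat \<Rightarrow> real \<Rightarrow> real) \<Rightarrow> bool" where
  "top_transitive fs \<longleftrightarrow>
     (\<forall>U V. openin (top_of_set unitI) U \<and> U \<noteq> {} \<and> openin (top_of_set unitI) V \<and> V \<noteq> {}
        \<longrightarrow> (\<exists>n\<ge>1. comp_seq fs n ` U \<inter> V \<noteq> {}))"

definition open_covers :: "'a topology \<Rightarrow> 'a set set set" where
  "open_covers X = {\<A>. finite \<A> \<and> (\<forall>U\<in>\<A>. openin X U) \<and> \<Union>\<A> = topspace X}"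

definition cover_num :: "'a topology \<Rightarrow> 'a set set \<Rightarrow> nat" where
  "cover_num X \<U> = (LEAST k. \<exists>\<V>\<subseteq>\<U>. finite \<V> \<and> \<Union>\<V> = topspace X \<and> card \<V> = k)"

text \<open>The join of the pulled-back covers (g_0^{a_i})^{-1} A over the first n terms of A.
  The sequence a_1 < a_2 < ... is represented by A 0 < A 1 < ... (a_(i+1) = A i).\<close>
definition join_pre :: "'a topology \<Rightarrow> (nat \<Rightarrow> 'a \<Rightarrow> 'a) \<Rightarrow> (nat \<Rightarrow> nat) \<Rightarrow> 'a set set \<Rightarrow> nat \<Rightarrow> 'a set set" where
  "join_pre X g A \<A> n =
     {topspace X \<inter> (\<Inter>i<n. comp_seq g (A i) -` C i) | C. \<forall>i<n. C i \<in> \<A>}"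

definition seq_entropy :: "'a topology \<Rightarrow> (nat \<Rightarrow> 'a \<Rightarrow> 'a) \<Rightarrow> (nat \<Rightarrow> nat) \<Rightarrow> ereal" where
  "seq_entropy X g A =
     (SUP \<A>\<in>open_covers X. limsup (\<lambda>n. ereal (ln (real (cover_num X (join_pre X g A \<A> n))) / real n)))"

abbreviation borelI :: "real measure" where "borelI \<equiv> restrict_space borel unitI"

definition probI :: "real measure set" where
  "probI = {\<mu>. prob_space \<mu> \<and> sets \<mu> = sets borelI}"

definition weak_star :: "real measure topology" where
  "weak_star = topology_generated_by
     {{\<mu>\<in>probI. (\<integral>x. \<phi> x \<partial>\<mu>) \<in> U} | (\<phi> :: real \<Rightarrow> real) (U :: real set). continuous_on unitI \<phi> \<and> open U}"

definition hat :: "(real \<Rightarrow> real) \<Rightarrow> real measure \<Rightarrow> real measure" where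
  "hat f \<mu> = distr \<mu> borelI f"

end

theory Submission
  imports Defs "HOL-Probability.Probability"
begin
lemma comp_seq_const: "comp_seq (\<lambda>n. g) n = g ^^ n"
  by (induction n) auto

lemma space_borelI[simp]: "space borelI = unitI"
  by (simp add: space_restrict_space)

lemma meas_I:
  assumes "continuous_on unitI g" "g ` unitI \<subseteq> unitI"
  shows "g \<in> borelI \<rightarrow>\<^sub>M borelI"
  by (rule measurable_restrict_space2) (use assms borel_measurable_continuous_on_restrict in auto)

lemma topspace_ws: "topspace weak_star = probI"
proof -
  have "probI \<in> {{\<mu>\<in>probI. (\<integral>x. \<phi> x \<partial>\<mu>) \<in> U} | (\<phi> :: real \<Rightarrow> real) (U :: real set). continuous_on unitI \<phi> \<and> open U}"
    by (rule CollectI, rule exI[of _ "\<lambda>x. 0"], rule exI[of _ UNIV]) auto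
  then show ?thesis
    unfolding weak_star_def topology_generated_by_topspace by blast
qed

lemma open_ws:
  fixes \<phi> :: "real \<Rightarrow> real"
  assumes "continuous_on unitI \<phi>" "open U"
  shows "openin weak_star {\<mu>\<in>probI. (\<integral>x. \<phi> x \<partial>\<mu>) \<in> U}"
  unfolding weak_star_def
  apply (rule topology_generated_by_Basis)
  using assms by blast

lemma probI_sets: "\<mu> \<in> probI \<Longrightarrow> sets \<mu> = sets borelI"
  by (simp add: probI_def)

lemma meas_mu: "\<mu> \<in> probI \<Longrightarrow> g \<in> borelI \<rightarrow>\<^sub>M borelI \<Longrightarrow> g \<in> \<mu> \<rightarrow>\<^sub>M borelI"
  using measurable_cong_sets[OF probI_sets refl] by blast

lemma hat_probI:
  assumes "\<mu> \<in> probI" "g \<in> borelI \<rightarrow>\<^sub>M borelI"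
  shows "hat g \<mu> \<in> probI"
  using assms unfolding hat_def probI_def
  by (auto intro!: prob_space.prob_space_distr meas_mu[OF assms(1)])

lemma hat_hat:
  assumes "\<mu> \<in> probI" "g \<in> borelI \<rightarrow>\<^sub>M borelI" "h \<in> borelI \<rightarrow>\<^sub>M borelI"
  shows "hat h (hat g \<mu>) = hat (h \<circ> g) \<mu>"
  unfolding hat_def by (rule distr_distr[OF assms(3) meas_mu[OF assms(1,2)]])

lemma hat_id_on:
  assumes "\<mu> \<in> probI" "\<And>x. x \<in> unitI \<Longrightarrow> g x = x"
  shows "hat g \<mu> = \<mu>"
proof -
  have sp: "space \<mu> = unitI" using sets_eq_imp_space_eq[OF probI_sets[OF assms(1)]] by simp
  have "hat g \<mu> = distr \<mu> borelI (\<lambda>x. x)"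
    unfolding hat_def by (rule distr_cong) (auto simp: sp assms(2))
  also have "\<dots> = \<mu>" by (rule distr_id2) (simp add: probI_sets[OF assms(1)])
  finally show ?thesis .
qed

lemma interval_in_open:
  assumes "openin (top_of_set unitI) V" "V \<noteq> {}"
  shows "\<exists>y1 y2. 0 < y1 \<and> y1 < y2 \<and> y2 < 1 \<and> {y1..y2} \<subseteq> V"
proof -
  obtain v where v: "v \<in> V" using assms(2) by blast
  have vI: "v \<in> unitI" using openin_subset[OF assms(1)] v by auto
  obtain e where e: "e > 0" "\<And>x'. x' \<in> unitI \<Longrightarrow> dist x' v < e \<Longrightarrow> x' \<in> V"
    using assms(1) v unfolding openin_euclidean_subtopology_iff by blast
  define d where "d = min (e/4) (1/8)"
  have d: "d > 0" "d \<le> e/4" "d \<le> 1/8" using e by (auto simp: d_def)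
  define w where "w = (if v < 1/2 then v + 2*d else v - 2*d)"
  have "0 < w - d" "w + d < 1" using vI d by (auto simp: w_def)
  moreover have "{w - d..w + d} \<subseteq> V"
  proof
    fix x assume x: "x \<in> {w - d..w + d}"
    have "x \<in> unitI" using x vI d by (auto simp: w_def split: if_splits)
    moreover have "dist x v < e" using x d vI by (auto simp: w_def dist_real_def split: if_splits)
    ultimately show "x \<in> V" using e by blast
  qed
  ultimately show ?thesis using d by (intro exI[of _ "w - d"] exI[of _ "w + d"]) auto
qed

definition qq :: "nat \<Rightarrow> real" where "qq = from_nat_into (\<rat> \<inter> {0<..})"

lemma qq_range: "range qq = \<rat> \<inter> {0<..}"
  unfolding qq_def
  by (rule range_from_nat_into) (auto intro: countable_Int1 countable_rat exI[of _ 1])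

lemma qq_pos: "qq k > 0" using qq_range by blast

definition fs2 :: "nat \<Rightarrow> real \<Rightarrow> real" where
  "fs2 n = (if even n then (\<lambda>x. x powr qq (n div 2)) else (\<lambda>x. x powr (1 / qq (n div 2))))"

lemma powr_I: "r > 0 \<Longrightarrow> x \<in> unitI \<Longrightarrow> x powr r \<in> unitI"
  by (auto intro: powr_le1)

lemma powr_cont: "(r::real) > 0 \<Longrightarrow> continuous_on unitI (\<lambda>x. x powr r)"
  by (rule continuous_on_powr') (auto intro: continuous_intros)

lemma fs2_cont: "continuous_on unitI (fs2 n)"
  unfolding fs2_def using qq_pos[of "n div 2"] powr_cont by auto

lemma fs2_I: "fs2 n ` unitI \<subseteq> unitI"
  unfolding fs2_def using qq_pos[of "n div 2"] powr_I by auto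

lemma fs2_comp:
  "x \<in> unitI \<Longrightarrow> comp_seq fs2 (2*k) x = x \<and> comp_seq fs2 (2*k+1) x = x powr qq k"
proof (induction k)
  case 0
  then show ?case by (simp add: fs2_def)
next
  case (Suc k)
  have e: "comp_seq fs2 (2*k) x = x" using Suc by blast
  have "comp_seq fs2 (2*Suc k) x = fs2 (2*k+1) (fs2 (2*k) x)"
    using e by (simp add: numeral_2_eq_2)
  also have "\<dots> = (x powr qq k) powr (1 / qq k)"
    by (simp add: fs2_def)
  also have "\<dots> = x" using qq_pos[of k] Suc.prems by (simp add: powr_powr)
  finally have a: "comp_seq fs2 (2*Suc k) x = x" .
  have "comp_seq fs2 (2*Suc k + 1) x = fs2 (2*Suc k) x" using a by simp
  also have "\<dots> = x powr qq (Suc k)" by (simp add: fs2_def)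
  finally show ?case using a by blast
qed

lemma fs2_trans: "top_transitive fs2"
  unfolding top_transitive_def
proof (intro allI impI)
  fix U V assume H: "openin (top_of_set unitI) U \<and> U \<noteq> {} \<and> openin (top_of_set unitI) V \<and> V \<noteq> {}"
  obtain x x2 where x: "0 < x" "x < x2" "x2 < 1" "{x..x2} \<subseteq> U" using interval_in_open H by blast
  obtain y1 y2 where y: "0 < y1" "y1 < y2" "y2 < 1" "{y1..y2} \<subseteq> V" using interval_in_open H by blast
  have lx: "ln x < 0" using x by simp
  have l1: "ln y1 < ln y2" "ln y2 < 0" using y by auto
  have "ln y2 / ln x < ln y1 / ln x" using lx l1 by (simp add: divide_strict_right_mono_neg)
  then obtain r where r: "r \<in> \<rat>" "ln y2 / ln x < r" "r < ln y1 / ln x"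
    using Rats_dense_in_real by blast
  have "0 < ln y2 / ln x" using lx l1 by (simp add: divide_neg_neg)
  with r have "r \<in> range qq" using qq_range by auto
  then obtain k where k: "qq k = r" by auto
  have "r * ln x < ln y2" using r(2) lx by (simp add: pos_divide_less_eq neg_divide_less_eq)
  moreover have "ln y1 < r * ln x" using r(3) lx by (simp add: less_divide_eq neg_less_divide_eq)
  ultimately have "exp (ln y1) < exp (r * ln x)" "exp (r * ln x) < exp (ln y2)" by auto
  moreover have "x powr r = exp (r * ln x)" using x(1) by (simp add: powr_def)
  ultimately have "x powr r \<in> {y1..y2}" using y(1,2) by auto
  moreover have "comp_seq fs2 (2*k+1) x = x powr r" using fs2_comp[of x k] x k by auto
  moreover have "x \<in> U" using x by auto
  ultimately have "comp_seq fs2 (2*k+1) x \<in> comp_seq fs2 (2*k+1) ` U \<inter> V" using y(4)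
    by (metis IntI imageI subsetD)
  then show "\<exists>n\<ge>1. comp_seq fs2 n ` U \<inter> V \<noteq> {}" by (intro exI[of _ "2*k+1"]) auto
qed

lemma cover_num_le:
  assumes "\<V> \<subseteq> \<U>" "finite \<V>" "\<Union>\<V> = topspace X"
  shows "cover_num X \<U> \<le> card \<V>"
  unfolding cover_num_def by (rule Least_le) (use assms in blast)

lemma ln_nat_nonneg: "0 \<le> ln (real (k::nat))"
  by (cases "k = 0") auto

lemma limsup_zero:
  assumes "\<And>n. 0 \<le> x n" "\<And>n. x n \<le> c / real n"
  shows "limsup (\<lambda>n. ereal (x n)) = 0"
proof -
  have "(\<lambda>n. c / real n) \<longlonglongrightarrow> 0" by (rule lim_const_over_n)
  moreover have "(\<lambda>n. 0::real) \<longlonglongrightarrow> 0" by simp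
  ultimately have "x \<longlonglongrightarrow> 0"
    by (intro real_tendsto_sandwich[of "\<lambda>_. 0" x sequentially "\<lambda>n. c / real n"]) (use assms in auto)
  then have L: "(\<lambda>n. ereal (x n)) \<longlonglongrightarrow> ereal 0" by (rule tendsto_ereal)
  show ?thesis using lim_imp_Limsup[OF trivial_limit_sequentially L] by (simp add: zero_ereal_def)
qed

lemma entropy_zero_gen:
  assumes idA: "\<And>i \<mu>. \<mu> \<in> topspace X \<Longrightarrow> comp_seq g (A i) \<mu> = \<mu>"
  shows "seq_entropy X g A = 0"
proof -
  have "limsup (\<lambda>n. ereal (ln (real (cover_num X (join_pre X g A \<A> n))) / real n)) = 0"
    if C: "\<A> \<in> open_covers X" for \<A>
  proof -
    have fin: "finite \<A>" and un: "\<Union>\<A> = topspace X" using C by (auto simp: open_covers_def)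
    have bound: "cover_num X (join_pre X g A \<A> n) \<le> card \<A> + 1" for n
    proof (cases "n = 0")
      case True
      have "join_pre X g A \<A> n = {topspace X}" using True by (auto simp: join_pre_def)
      then show ?thesis using cover_num_le[of "{topspace X}" "join_pre X g A \<A> n" X] by simp
    next
      case False
      define \<V> where "\<V> = (\<lambda>C. topspace X \<inter> C) ` \<A>"
      have "\<V> \<subseteq> join_pre X g A \<A> n"
      proof
        fix W assume "W \<in> \<V>"
        then obtain C where C: "C \<in> \<A>" "W = topspace X \<inter> C" by (auto simp: \<V>_def)
        have "topspace X \<inter> (\<Inter>i<n. comp_seq g (A i) -` (\<lambda>i. C) i) = topspace X \<inter> C"
          using idA False by auto
        then show "W \<in> join_pre X g A \<A> n" unfolding join_pre_def using C
          by (intro CollectI exI[of _ "\<lambda>i. C"]) auto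
      qed
      moreover have "finite \<V>" using fin by (simp add: \<V>_def)
      moreover have "\<Union>\<V> = topspace X" using un by (auto simp: \<V>_def)
      ultimately have "cover_num X (join_pre X g A \<A> n) \<le> card \<V>" by (rule cover_num_le)
      also have "\<dots> \<le> card \<A>" unfolding \<V>_def using fin by (rule card_image_le)
      finally show ?thesis by simp
    qed
    show ?thesis
    proof (rule limsup_zero)
      fix n
      show "0 \<le> ln (real (cover_num X (join_pre X g A \<A> n))) / real n"
        using ln_nat_nonneg by simp
      have "ln (real (cover_num X (join_pre X g A \<A> n))) \<le> ln (real (card \<A> + 1))"
      proof (cases "cover_num X (join_pre X g A \<A> n) = 0")
        case True then show ?thesis using ln_nat_nonneg[of "card \<A> + 1"] by simp
      next
        case False then show ?thesis using bound[of n] by (subst ln_le_cancel_iff) auto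
      qed
      then show "ln (real (cover_num X (join_pre X g A \<A> n))) / real n \<le> ln (real (card \<A> + 1)) / real n"
        by (simp add: divide_right_mono)
    qed
  qed
  moreover have "{topspace X} \<in> open_covers X"
    unfolding open_covers_def by auto
  then have "open_covers X \<noteq> {}" by blast
  ultimately show ?thesis unfolding seq_entropy_def by simp
qed

lemma fs2_even_hat:
  assumes "\<mu> \<in> probI"
  shows "comp_seq (\<lambda>n. hat (fs2 n)) (2*k) \<mu> = \<mu>"
proof (induction k)
  case 0 then show ?case by simp
next
  case (Suc k)
  have m: "fs2 j \<in> borelI \<rightarrow>\<^sub>M borelI" for j by (rule meas_I[OF fs2_cont fs2_I])
  have "comp_seq (\<lambda>n. hat (fs2 n)) (2*Suc k) \<mu> = hat (fs2 (2*k+1)) (hat (fs2 (2*k)) \<mu>)"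
    using Suc by (simp add: numeral_2_eq_2)
  also have "\<dots> = hat (fs2 (2*k+1) \<circ> fs2 (2*k)) \<mu>" by (rule hat_hat[OF assms m m])
  also have "\<dots> = \<mu>"
  proof (rule hat_id_on[OF assms])
    fix x :: real assume "x \<in> unitI"
    then show "(fs2 (2*k+1) \<circ> fs2 (2*k)) x = x"
      using qq_pos[of k] by (simp add: fs2_def powr_powr)
  qed
  finally show ?case .
qed

lemma part2: "\<exists>fs :: nat \<Rightarrow> real \<Rightarrow> real. (\<forall>n. continuous_on unitI (fs n) \<and> fs n ` unitI \<subseteq> unitI)
            \<and> top_transitive fs
            \<and> (\<exists>A :: nat \<Rightarrow> nat. strict_mono A \<and> seq_entropy weak_star (\<lambda>n. hat (fs n)) A = 0)"
proof (intro exI[of _ fs2] exI[of _ "\<lambda>i. 2*i"] conjI allI)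
  show "strict_mono (\<lambda>i::nat. 2*i)" by (auto simp: strict_mono_def)
  show "seq_entropy weak_star (\<lambda>n. hat (fs2 n)) (\<lambda>i. 2 * i) = 0"
    by (rule entropy_zero_gen) (simp add: topspace_ws fs2_even_hat)
qed (auto simp: fs2_cont fs2_I fs2_trans)

definition trans_on :: "real \<Rightarrow> real \<Rightarrow> (real \<Rightarrow> real) \<Rightarrow> bool" where
  "trans_on \<alpha> \<beta> g \<longleftrightarrow> (\<forall>U V. openin (top_of_set {\<alpha>..\<beta>}) U \<and> U \<noteq> {} \<and>
      openin (top_of_set {\<alpha>..\<beta>}) V \<and> V \<noteq> {} \<longrightarrow> (\<exists>n\<ge>1. (g ^^ n) ` U \<inter> V \<noteq> {}))"

definition horse_on :: "real \<Rightarrow> real \<Rightarrow> (real \<Rightarrow> real) \<Rightarrow> bool" where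
  "horse_on \<alpha> \<beta> h \<longleftrightarrow> (\<exists>a0 b0 a1 b1. \<alpha> \<le> a0 \<and> a0 < b0 \<and> b0 < a1 \<and> a1 < b1 \<and> b1 \<le> \<beta> \<and>
      {a0..b0} \<union> {a1..b1} \<subseteq> h ` {a0..b0} \<and> {a0..b0} \<union> {a1..b1} \<subseteq> h ` {a1..b1})"

lemma openin_ivl: "{a<..<b} \<subseteq> S \<Longrightarrow> openin (top_of_set S) {a<..<(b::real)}"
  unfolding openin_open by (rule exI[of _ "{a<..<b}"]) auto

lemma ivt_img:
  fixes h :: "real \<Rightarrow> real"
  assumes "continuous_on {a..b} h" "(a::real) \<le> b"
  shows "{min (h a) (h b)..max (h a) (h b)} \<subseteq> h ` {a..b}"
proof
  fix w assume w: "w \<in> {min (h a) (h b)..max (h a) (h b)}"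
  show "w \<in> h ` {a..b}"
  proof (cases "h a \<le> h b")
    case True
    then obtain x where "a \<le> x" "x \<le> b" "h x = w" using IVT'[of h a w b] w assms by auto
    then show ?thesis by auto
  next
    case False
    then obtain x where "a \<le> x" "x \<le> b" "h x = w" using IVT2'[of h b w a] w assms by auto
    then show ?thesis by auto
  qed
qed

lemma no_root_same_side:
  fixes h :: "real \<Rightarrow> real"
  assumes "continuous_on {a..b} h" "(a::real) \<le> b" "\<forall>x\<in>{a..b}. h x \<noteq> c"
  shows "h a < c \<longleftrightarrow> h b < c"
proof -
  have "\<not> (min (h a) (h b) \<le> c \<and> c \<le> max (h a) (h b))"
  proof
    assume "min (h a) (h b) \<le> c \<and> c \<le> max (h a) (h b)"
    then have "c \<in> h ` {a..b}" using ivt_img[OF assms(1,2)] by auto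
    then show False using assms(3) by auto
  qed
  then show ?thesis by auto
qed

lemma funpow_cont:
  assumes "continuous_on S g" "g ` S \<subseteq> S"
  shows "continuous_on S (g ^^ n) \<and> (g ^^ n) ` S \<subseteq> S"
proof (induction n)
  case 0 then show ?case by (simp add: continuous_on_id)
next
  case (Suc n)
  have "continuous_on S (\<lambda>x. g ((g ^^ n) x))"
    by (rule continuous_on_compose2[OF assms(1)]) (use Suc in auto)
  then show ?case using Suc assms(2) by (auto simp: o_def)
qed

lemma funpow_inv:
  assumes "g ` T \<subseteq> S" "g ` S \<subseteq> S" "S \<subseteq> T" "n \<ge> 1"
  shows "(g ^^ n) ` T \<subseteq> S"
  using assms(4)
proof (induction n rule: dec_induct)
  case base then show ?case using assms(1) by simp
next
  case (step n) then show ?case using assms(2) by (auto simp: image_subset_iff)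
qed

lemma trans_inv_contra:
  assumes "trans_on \<alpha> \<beta> g" "g ` T \<subseteq> S" "g ` S \<subseteq> S" "S \<subseteq> T" "T \<subseteq> {\<alpha>..\<beta>}"
    "{a<..<b} \<subseteq> T" "a < b" "{c<..<d} \<subseteq> {\<alpha>..\<beta>}" "c < d" "{c<..<d} \<inter> S = {}"
  shows False
proof -
  have "openin (top_of_set {\<alpha>..\<beta>}) {a<..<b}" "openin (top_of_set {\<alpha>..\<beta>}) {c<..<d}"
    using assms openin_ivl by auto
  moreover have "{a<..<b} \<noteq> {}" "{c<..<d} \<noteq> {}" using assms by auto
  ultimately obtain n where n: "n \<ge> 1" "(g ^^ n) ` {a<..<b} \<inter> {c<..<d} \<noteq> {}"
    using assms(1) unfolding trans_on_def by blast
  have "(g ^^ n) ` T \<subseteq> S" by (rule funpow_inv) (use assms n in auto)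
  then show False using n assms(6,10) by blast
qed

lemma cont_strict_nbhd:
  fixes G :: "real \<Rightarrow> real"
  assumes "continuous_on S G" "u \<in> S" "G u < c"
  shows "\<exists>\<delta>>0. \<forall>x\<in>S. \<bar>x - u\<bar> < \<delta> \<longrightarrow> G x < c"
proof -
  obtain d where d: "d > 0" "\<forall>x\<in>S. dist x u < d \<longrightarrow> dist (G x) (G u) < c - G u"
    using assms unfolding continuous_on_iff by (metis diff_gt_0_iff_gt)
  show ?thesis using d by (intro exI[of _ d]) (auto simp: dist_real_def)
qed

lemma horse_gen:
  fixes G :: "real \<Rightarrow> real"
  assumes cont: "continuous_on {\<alpha>..\<beta>} G" and pq: "\<alpha> \<le> p" "p < u" "u < q" "q \<le> \<beta>"
    and side: "(G p \<ge> q \<and> G q \<ge> q \<and> G u < p) \<or> (G p \<le> p \<and> G q \<le> p \<and> G u > q)"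
  shows "horse_on \<alpha> \<beta> G"
proof -
  have uS: "u \<in> {\<alpha>..\<beta>}" using pq by auto
  obtain \<delta> where \<delta>: "\<delta> > 0" "\<forall>x\<in>{\<alpha>..\<beta>}. \<bar>x - u\<bar> < \<delta> \<longrightarrow> (G u < p \<longrightarrow> G x < p) \<and> (G u > q \<longrightarrow> G x > q)"
  proof (cases "G u < p")
    case True
    obtain \<delta> where "\<delta>>0" "\<forall>x\<in>{\<alpha>..\<beta>}. \<bar>x - u\<bar> < \<delta> \<longrightarrow> G x < p"
      using cont_strict_nbhd[OF cont uS True] by blast
    then show ?thesis using that True pq by force
  next
    case False
    then have "G u > q" using side by auto
    then have "(\<lambda>x. - G x) u < - q" by simp
    moreover have "continuous_on {\<alpha>..\<beta>} (\<lambda>x. - G x)" using cont by (intro continuous_intros)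
    ultimately obtain \<delta> where "\<delta>>0" "\<forall>x\<in>{\<alpha>..\<beta>}. \<bar>x - u\<bar> < \<delta> \<longrightarrow> - G x < - q"
      using cont_strict_nbhd[OF _ uS] by blast
    then show ?thesis using that False by force
  qed
  define u1 where "u1 = max (u - \<delta>/2) ((p + u)/2)"
  define u2 where "u2 = min (u + \<delta>/2) ((u + q)/2)"
  have u1: "p < u1" "u1 < u" "\<bar>u1 - u\<bar> < \<delta>" and u2: "u < u2" "u2 < q" "\<bar>u2 - u\<bar> < \<delta>"
    using pq \<delta>(1) unfolding u1_def u2_def by (auto simp: max_def min_def abs_if field_simps)
  have u1S: "u1 \<in> {\<alpha>..\<beta>}" and u2S: "u2 \<in> {\<alpha>..\<beta>}" using u1 u2 pq by auto
  have c1: "continuous_on {p..u1} G" by (rule continuous_on_subset[OF cont]) (use pq u1 in auto)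
  have c2: "continuous_on {u2..q} G" by (rule continuous_on_subset[OF cont]) (use pq u2 in auto)
  have i1: "{min (G p) (G u1)..max (G p) (G u1)} \<subseteq> G ` {p..u1}" by (rule ivt_img[OF c1]) (use u1 in auto)
  have i2: "{min (G u2) (G q)..max (G u2) (G q)} \<subseteq> G ` {u2..q}" by (rule ivt_img[OF c2]) (use u2 in auto)
  have "{p..q} \<subseteq> G ` {p..u1} \<and> {p..q} \<subseteq> G ` {u2..q}"
  proof (cases "G u < p")
    case True
    then have "G u1 < p" "G u2 < p" "G p \<ge> q" "G q \<ge> q" using \<delta> u1 u2 u1S u2S side by auto
    then show ?thesis using i1 i2 by fastforce
  next
    case False
    then have "G u > q" "G p \<le> p" "G q \<le> p" using side by auto
    then have "G u1 > q" "G u2 > q" using \<delta> u1 u2 u1S u2S by auto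
    then show ?thesis using i1 i2 \<open>G p \<le> p\<close> \<open>G q \<le> p\<close> by fastforce
  qed
  then show ?thesis unfolding horse_on_def using pq u1 u2
    by (intro exI[of _ p] exI[of _ u1] exI[of _ u2] exI[of _ q]) auto
qed

lemma funpow_fix: "g z = z \<Longrightarrow> (g ^^ n) z = z"
  by (induction n) auto

lemma funpow_pre: "g y = z \<Longrightarrow> g z = z \<Longrightarrow> n \<ge> 1 \<Longrightarrow> (g ^^ n) y = z"
  by (cases n) (auto simp: funpow_Suc_right funpow_fix simp del: funpow.simps)

lemma side_lemma:
  fixes g :: "real \<Rightarrow> real"
  assumes cont: "continuous_on {\<alpha>..\<beta>} g" and xm: "x \<in> {\<alpha>..\<beta>}" "m \<in> {\<alpha>..\<beta>}"
    and nor: "\<forall>w\<in>{min x m..max x m}. g w \<noteq> z"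
  shows "g x < z \<longleftrightarrow> g m < z"
proof -
  have c: "continuous_on {min x m..max x m} g" by (rule continuous_on_subset[OF cont]) (use xm in auto)
  have "g (min x m) < z \<longleftrightarrow> g (max x m) < z" by (rule no_root_same_side[OF c _ nor]) simp
  then show ?thesis by (cases "x \<le> m") (auto simp: min_def max_def)
qed

lemma dichotomy:
  fixes g :: "real \<Rightarrow> real"
  assumes ab: "\<alpha> < \<beta>" and cont: "continuous_on {\<alpha>..\<beta>} g" and into: "g ` {\<alpha>..\<beta>} \<subseteq> {\<alpha>..\<beta>}"
    and tr: "trans_on \<alpha> \<beta> g"
  shows "(\<exists>k\<ge>1. horse_on \<alpha> \<beta> (g ^^ k)) \<or>
    (\<exists>z. \<alpha> < z \<and> z < \<beta> \<and> g z = z \<and> (\<forall>x\<in>{\<alpha>..z}. z \<le> g x) \<and> (\<forall>x\<in>{z..\<beta>}. g x \<le> z))"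
proof -
  have gI: "x \<in> {\<alpha>..\<beta>} \<Longrightarrow> g x \<in> {\<alpha>..\<beta>}" for x using into by blast
  obtain z where z: "\<alpha> < z" "z < \<beta>" "g z = z"
  proof (rule ccontr)
    assume "\<not> thesis"
    then have nofix: "\<And>x. \<alpha> < x \<Longrightarrow> x < \<beta> \<Longrightarrow> g x \<noteq> x" using that by blast
    define m where "m = (\<alpha> + \<beta>) / 2"
    have m: "\<alpha> < m" "m < \<beta>" using ab by (auto simp: m_def)
    define h where "h x = g x - x" for x
    have ch: "continuous_on {\<alpha>..\<beta>} h" unfolding h_def by (intro continuous_intros cont)
    have "g m \<noteq> m" using nofix m by auto
    then consider "g m > m" | "g m < m" by linarith
    then show False
    proof cases
      case 1
      have "g ` {m..\<beta>} \<subseteq> {m..\<beta>}"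
      proof (rule image_subsetI)
        fix x assume x: "x \<in> {m..\<beta>}"
        have "h x \<ge> 0"
        proof (rule ccontr)
          assume hx: "\<not> h x \<ge> 0"
          have c: "continuous_on {m..x} h" by (rule continuous_on_subset[OF ch]) (use x m in auto)
          have "0 \<in> h ` {m..x}" using ivt_img[OF c] x hx 1 by (force simp: h_def)
          then obtain w where w: "w \<in> {m..x}" "h w = 0" by auto
          have "w \<noteq> x" using w hx by auto
          then have "w < \<beta>" using w x by auto
          then show False using nofix[of w] w m by (auto simp: h_def)
        qed
        then show "g x \<in> {m..\<beta>}" using x gI[of x] m by (auto simp: h_def)
      qed
      then show False
        by (intro trans_inv_contra[OF tr, of "{m..\<beta>}" "{m..\<beta>}" m \<beta> \<alpha> m]) (use m in auto)
    next
      case 2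
      have "g ` {\<alpha>..m} \<subseteq> {\<alpha>..m}"
      proof (rule image_subsetI)
        fix x assume x: "x \<in> {\<alpha>..m}"
        have "h x \<le> 0"
        proof (rule ccontr)
          assume hx: "\<not> h x \<le> 0"
          have c: "continuous_on {x..m} h" by (rule continuous_on_subset[OF ch]) (use x m in auto)
          have "0 \<in> h ` {x..m}" using ivt_img[OF c] x hx 2 by (force simp: h_def)
          then obtain w where w: "w \<in> {x..m}" "h w = 0" by auto
          have "w \<noteq> x" using w hx by auto
          then have "\<alpha> < w" using w x by auto
          then show False using nofix[of w] w m by (auto simp: h_def)
        qed
        then show "g x \<in> {\<alpha>..m}" using x gI[of x] m by (auto simp: h_def)
      qed
      then show False
        by (intro trans_inv_contra[OF tr, of "{\<alpha>..m}" "{\<alpha>..m}" \<alpha> m m \<beta>]) (use m in auto)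
    qed
  qed
  show ?thesis
  proof (cases "\<exists>y. \<alpha> < y \<and> y < \<beta> \<and> y \<noteq> z \<and> g y = z")
    case True
    then obtain y where y: "\<alpha> < y" "y < \<beta>" "y \<noteq> z" "g y = z" by blast
    show ?thesis
    proof (cases "y < z")
      case True
      have "openin (top_of_set {\<alpha>..\<beta>}) {y<..<z}" "openin (top_of_set {\<alpha>..\<beta>}) {\<alpha><..<y}"
        using y z by (auto intro!: openin_ivl)
      moreover have "{y<..<z} \<noteq> {}" "{\<alpha><..<y} \<noteq> {}" using y True by auto
      ultimately obtain n where n: "n \<ge> 1" "(g ^^ n) ` {y<..<z} \<inter> {\<alpha><..<y} \<noteq> {}"
        using tr unfolding trans_on_def by blast
      then obtain u where u: "y < u" "u < z" "(g ^^ n) u < y" by auto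
      have "horse_on \<alpha> \<beta> (g ^^ n)"
        by (rule horse_gen[of _ _ _ y u z]) (use funpow_cont[OF cont into] funpow_pre[OF y(4) z(3) n(1)]
              funpow_fix[of g z n] z y u in auto)
      then show ?thesis using n by blast
    next
      case False
      then have yz: "z < y" using y by auto
      have "openin (top_of_set {\<alpha>..\<beta>}) {z<..<y}" "openin (top_of_set {\<alpha>..\<beta>}) {y<..<\<beta>}"
        using y z by (auto intro!: openin_ivl)
      moreover have "{z<..<y} \<noteq> {}" "{y<..<\<beta>} \<noteq> {}" using y yz by auto
      ultimately obtain n where n: "n \<ge> 1" "(g ^^ n) ` {z<..<y} \<inter> {y<..<\<beta>} \<noteq> {}"
        using tr unfolding trans_on_def by blast
      then obtain u where u: "z < u" "u < y" "(g ^^ n) u > y" by auto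
      have "horse_on \<alpha> \<beta> (g ^^ n)"
        by (rule horse_gen[of _ _ _ z u y]) (use funpow_cont[OF cont into] funpow_pre[OF y(4) z(3) n(1)]
              funpow_fix[of g z n] z y u in auto)
      then show ?thesis using n by blast
    qed
  next
    case False
    then have N: "\<And>w. \<alpha> < w \<Longrightarrow> w < \<beta> \<Longrightarrow> w \<noteq> z \<Longrightarrow> g w \<noteq> z" by blast
    define m1 where "m1 = (\<alpha> + z) / 2"
    define m2 where "m2 = (z + \<beta>) / 2"
    have m1: "\<alpha> < m1" "m1 < z" and m2: "z < m2" "m2 < \<beta>" using z by (auto simp: m1_def m2_def)
    have gm: "g m1 \<noteq> z" "g m2 \<noteq> z" using N m1 m2 z by auto
    have left: "g x < z \<longleftrightarrow> g m1 < z" if x: "x \<in> {\<alpha>..z}" "g x \<noteq> z" for x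
    proof (rule side_lemma[OF cont])
      show "x \<in> {\<alpha>..\<beta>}" "m1 \<in> {\<alpha>..\<beta>}" using x z m1 by auto
      show "\<forall>w\<in>{min x m1..max x m1}. g w \<noteq> z"
      proof
        fix w assume w: "w \<in> {min x m1..max x m1}"
        have "x \<noteq> z" using x z by auto
        show "g w \<noteq> z"
        proof (cases "w = x")
          case True then show ?thesis using x by simp
        next
          case False
          then have "\<alpha> < w" "w < z" using w x m1 \<open>x \<noteq> z\<close> by (auto simp: min_def max_def split: if_splits)
          then show ?thesis using N z by auto
        qed
      qed
    qed
    have right: "g x < z \<longleftrightarrow> g m2 < z" if x: "x \<in> {z..\<beta>}" "g x \<noteq> z" for x
    proof (rule side_lemma[OF cont])
      show "x \<in> {\<alpha>..\<beta>}" "m2 \<in> {\<alpha>..\<beta>}" using x z m2 by auto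
      show "\<forall>w\<in>{min x m2..max x m2}. g w \<noteq> z"
      proof
        fix w assume w: "w \<in> {min x m2..max x m2}"
        have "x \<noteq> z" using x z by auto
        show "g w \<noteq> z"
        proof (cases "w = x")
          case True then show ?thesis using x by simp
        next
          case False
          then have "z < w" "w < \<beta>" using w x m2 \<open>x \<noteq> z\<close> by (auto simp: min_def max_def split: if_splits)
          then show ?thesis using N z by auto
        qed
      qed
    qed
    have L1: "g m1 < z \<Longrightarrow> x \<in> {\<alpha>..z} \<Longrightarrow> g x \<le> z" for x using left[of x] by force
    have L2: "g m1 > z \<Longrightarrow> x \<in> {\<alpha>..z} \<Longrightarrow> g x \<ge> z" for x using left[of x] by force
    have R1: "g m2 < z \<Longrightarrow> x \<in> {z..\<beta>} \<Longrightarrow> g x \<le> z" for x using right[of x] by force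
    have R2: "g m2 > z \<Longrightarrow> x \<in> {z..\<beta>} \<Longrightarrow> g x \<ge> z" for x using right[of x] by force
    consider "g m1 < z" "g m2 < z" | "g m1 < z" "g m2 > z" | "g m1 > z" "g m2 < z" | "g m1 > z" "g m2 > z"
      using gm by linarith
    then show ?thesis
    proof cases
      case 1
      have "g ` {\<alpha>..\<beta>} \<subseteq> {\<alpha>..z}"
      proof (rule image_subsetI)
        fix x assume x: "x \<in> {\<alpha>..\<beta>}"
        then have "g x \<le> z" using L1[OF 1(1)] R1[OF 1(2)] by (cases "x \<le> z") auto
        then show "g x \<in> {\<alpha>..z}" using gI[OF x] by auto
      qed
      then have False
        by (intro trans_inv_contra[OF tr, of "{\<alpha>..\<beta>}" "{\<alpha>..z}" z \<beta> z \<beta>]) (use z in auto)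
      then show ?thesis ..
    next
      case 2
      have "g ` {\<alpha>..z} \<subseteq> {\<alpha>..z}"
      proof (rule image_subsetI)
        fix x assume x: "x \<in> {\<alpha>..z}"
        then have "g x \<le> z" using L1[OF 2(1)] by auto
        then show "g x \<in> {\<alpha>..z}" using gI[of x] x z by auto
      qed
      then have False
        by (intro trans_inv_contra[OF tr, of "{\<alpha>..z}" "{\<alpha>..z}" \<alpha> z z \<beta>]) (use z in auto)
      then show ?thesis ..
    next
      case 3
      then show ?thesis using L2 R1 z by blast
    next
      case 4
      have "g ` {\<alpha>..\<beta>} \<subseteq> {z..\<beta>}"
      proof (rule image_subsetI)
        fix x assume x: "x \<in> {\<alpha>..\<beta>}"
        then have "g x \<ge> z" using L2[OF 4(1)] R2[OF 4(2)] by (cases "x \<le> z") auto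
        then show "g x \<in> {z..\<beta>}" using gI[OF x] by auto
      qed
      then have False
        by (intro trans_inv_contra[OF tr, of "{\<alpha>..\<beta>}" "{z..\<beta>}" \<alpha> z \<alpha> z]) (use z in auto)
      then show ?thesis ..
    qed
  qed
qed

lemma interval_in_open2:
  fixes \<alpha> \<beta> :: real
  assumes ab: "\<alpha> < \<beta>" and "openin (top_of_set {\<alpha>..\<beta>}) V" "V \<noteq> {}"
  shows "\<exists>y1 y2. \<alpha> < y1 \<and> y1 < y2 \<and> y2 < \<beta> \<and> {y1..y2} \<subseteq> V"
proof -
  obtain v where v: "v \<in> V" using assms(3) by blast
  have vI: "v \<in> {\<alpha>..\<beta>}" using openin_subset[OF assms(2)] v by auto
  obtain e where e: "e > 0" "\<And>x'. x' \<in> {\<alpha>..\<beta>} \<Longrightarrow> dist x' v < e \<Longrightarrow> x' \<in> V"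
    using assms(2) v unfolding openin_euclidean_subtopology_iff by blast
  define d where "d = min (e/4) ((\<beta> - \<alpha>)/8)"
  have d0: "d > 0" using e ab unfolding d_def by simp
  have d1: "d \<le> e/4" unfolding d_def by (rule min.cobounded1)
  have d2: "d \<le> (\<beta> - \<alpha>)/8" unfolding d_def by (rule min.cobounded2)
  note d = d0 d1 d2
  define w where "w = (if v < (\<alpha> + \<beta>)/2 then v + 2*d else v - 2*d)"
  have "\<alpha> < w - d" "w + d < \<beta>" using vI d by (auto simp: w_def field_simps)
  moreover have "{w - d..w + d} \<subseteq> V"
  proof
    fix x assume x: "x \<in> {w - d..w + d}"
    have "x \<in> {\<alpha>..\<beta>}" using x vI d by (auto simp: w_def field_simps split: if_splits)
    moreover have "dist x v < e" using x d vI by (auto simp: w_def dist_real_def split: if_splits)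
    ultimately show "x \<in> V" using e by blast
  qed
  ultimately show ?thesis using d by (intro exI[of _ "w - d"] exI[of _ "w + d"]) auto
qed

lemma horse_mono: "horse_on \<alpha>' \<beta>' h \<Longrightarrow> \<alpha> \<le> \<alpha>' \<Longrightarrow> \<beta>' \<le> \<beta> \<Longrightarrow> horse_on \<alpha> \<beta> h"
  unfolding horse_on_def by (meson order_trans)

context
  fixes f :: "real \<Rightarrow> real"
  assumes cont: "continuous_on unitI f" and into: "f ` unitI \<subseteq> unitI"
    and tr: "top_transitive (\<lambda>n. f)"
begin

lemma fI: "x \<in> unitI \<Longrightarrow> f x \<in> unitI"
  using into by blast

lemma trf: "trans_on 0 1 f"
  using tr unfolding top_transitive_def trans_on_def comp_seq_const by blast

lemma parity:
  assumes z: "0 < z" "z < 1" "\<forall>x\<in>{0..z}. z \<le> f x" "\<forall>x\<in>{z..1}. f x \<le> z" and x: "x \<in> {0..z}"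
  shows "(f ^^ (2*m)) x \<in> {0..z} \<and> (f ^^ (2*m+1)) x \<in> {z..1}"
proof (induction m)
  case 0
  have "f x \<in> unitI" using fI x z by auto
  then show ?case using x z by auto
next
  case (Suc m)
  have a: "(f ^^ (2*Suc m)) x = f ((f ^^ (2*m+1)) x)" by (simp add: numeral_2_eq_2)
  have "f ((f ^^ (2*m+1)) x) \<in> unitI" using fI Suc z by auto
  then have b: "(f ^^ (2*Suc m)) x \<in> {0..z}" using a Suc z by auto
  moreover have "f ((f ^^ (2*Suc m)) x) \<in> unitI" using fI b z by auto
  ultimately show ?case using z by auto
qed

lemma horse_f: "\<exists>p\<ge>1. horse_on 0 1 (f ^^ p)"
proof -
  have "(\<exists>k\<ge>1. horse_on 0 1 (f ^^ k)) \<or>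
    (\<exists>z. 0 < z \<and> z < 1 \<and> f z = z \<and> (\<forall>x\<in>{0..z}. z \<le> f x) \<and> (\<forall>x\<in>{z..1}. f x \<le> z))"
    by (rule dichotomy[OF _ cont into trf]) simp
  then show ?thesis
  proof
    assume "\<exists>z. 0 < z \<and> z < 1 \<and> f z = z \<and> (\<forall>x\<in>{0..z}. z \<le> f x) \<and> (\<forall>x\<in>{z..1}. f x \<le> z)"
    then obtain z where z: "0 < z" "z < 1" "f z = z" "\<forall>x\<in>{0..z}. z \<le> f x" "\<forall>x\<in>{z..1}. f x \<le> z" by blast
    define g where "g = f ^^ 2"
    have gpow: "g ^^ m = f ^^ (2*m)" for m unfolding g_def by (simp add: funpow_mult)
    have ginto: "g ` {0..z} \<subseteq> {0..z}" using parity[OF z(1,2,4,5), of _ 1] gpow[of 1] by auto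
    have fcz: "continuous_on {0..1} (f ^^ 2)" using funpow_cont[OF cont into] by blast
    have gcont: "continuous_on {0..z} g" unfolding g_def by (rule continuous_on_subset[OF fcz]) (use z in auto)
    have gtr: "trans_on 0 z g"
      unfolding trans_on_def
    proof (intro allI impI)
      fix U V assume H: "openin (top_of_set {0..z}) U \<and> U \<noteq> {} \<and> openin (top_of_set {0..z}) V \<and> V \<noteq> {}"
      obtain x1 x2 where x: "0 < x1" "x1 < x2" "x2 < z" "{x1..x2} \<subseteq> U" using interval_in_open2[OF z(1)] H by blast
      obtain y1 y2 where y: "0 < y1" "y1 < y2" "y2 < z" "{y1..y2} \<subseteq> V" using interval_in_open2[OF z(1)] H by blast
      have "openin (top_of_set unitI) {x1<..<x2}" "openin (top_of_set unitI) {y1<..<y2}"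
        using x y z by (auto intro!: openin_ivl)
      moreover have "{x1<..<x2} \<noteq> {}" "{y1<..<y2} \<noteq> {}" using x y by auto
      ultimately obtain n where n: "n \<ge> 1" "(f ^^ n) ` {x1<..<x2} \<inter> {y1<..<y2} \<noteq> {}"
        using trf unfolding trans_on_def by blast
      then obtain u where "u \<in> {x1<..<x2}" "(f ^^ n) u \<in> {y1<..<y2}" by blast
      then have u: "x1 < u" "u < x2" "(f ^^ n) u \<in> {y1<..<y2}" by auto
      have uz: "u \<in> {0..z}" using u x by auto
      show "\<exists>n\<ge>1. (g ^^ n) ` U \<inter> V \<noteq> {}"
      proof (cases "even n")
        case True
        then obtain m where m: "n = 2*m" by blast
        then have "m \<ge> 1" using n by auto
        moreover have "u \<in> U" "(g ^^ m) u \<in> V" using u x y gpow[of m] m by auto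
        then have "(g ^^ m) u \<in> (g ^^ m) ` U \<inter> V" by blast
        ultimately show ?thesis by blast
      next
        case False
        then obtain m where m: "n = 2*m+1" using oddE by blast
        then have "(f ^^ n) u \<in> {z..1}" using parity[OF z(1,2,4,5) uz] by blast
        then show ?thesis using u y by auto
      qed
    qed
    have "(\<exists>k\<ge>1. horse_on 0 z (g ^^ k)) \<or>
      (\<exists>z'. 0 < z' \<and> z' < z \<and> g z' = z' \<and> (\<forall>x\<in>{0..z'}. z' \<le> g x) \<and> (\<forall>x\<in>{z'..z}. g x \<le> z'))"
      by (rule dichotomy[OF z(1) gcont ginto gtr])
    then show ?thesis
    proof
      assume "\<exists>k\<ge>1. horse_on 0 z (g ^^ k)"
      then obtain k where "k \<ge> 1" "horse_on 0 z (f ^^ (2*k))" using gpow by auto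
      then show ?thesis using z by (intro exI[of _ "2*k"]) (auto intro: horse_mono)
    next
      assume "\<exists>z'. 0 < z' \<and> z' < z \<and> g z' = z' \<and> (\<forall>x\<in>{0..z'}. z' \<le> g x) \<and> (\<forall>x\<in>{z'..z}. g x \<le> z')"
      then obtain z' where z': "z' < z" "\<forall>x\<in>{z'..z}. g x \<le> z'" by blast
      have "g z = z" using z(3) by (simp add: g_def numeral_2_eq_2)
      moreover have "g z \<le> z'" using z' by simp
      ultimately have False using z' by linarith
      then show ?thesis ..
    qed
  qed
qed

end

definition muX :: "nat \<Rightarrow> (nat \<Rightarrow> real) \<Rightarrow> real measure" where
  "muX K X = distr (measure_pmf (pmf_of_set {..<K})) borelI X"

lemma muX_meas: "(\<And>j. X j \<in> unitI) \<Longrightarrow> X \<in> measure_pmf Q \<rightarrow>\<^sub>M borelI"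
  by (auto simp: measurable_pmf_measure1)

lemma muX_probI: "(\<And>j. X j \<in> unitI) \<Longrightarrow> muX K X \<in> probI"
  unfolding probI_def muX_def
  by (auto intro!: measure_pmf.prob_space_distr muX_meas)

lemma muX_hat:
  assumes "\<And>j. X j \<in> unitI" "g \<in> borelI \<rightarrow>\<^sub>M borelI"
  shows "hat g (muX K X) = muX K (g \<circ> X)"
  unfolding hat_def muX_def by (rule distr_distr[OF assms(2) muX_meas[OF assms(1)]])

lemma comp_seq_muX:
  assumes "continuous_on unitI f" "f ` unitI \<subseteq> unitI" "\<And>j. X j \<in> unitI"
  shows "comp_seq (\<lambda>n. hat f) t (muX K X) = muX K ((f ^^ t) \<circ> X)"
proof (induction t)
  case 0 then show ?case by (simp add: o_def)
next
  case (Suc t)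
  have XI: "((f ^^ t) \<circ> X) j \<in> unitI" for j
  proof -
    have "(f ^^ t) ` unitI \<subseteq> unitI" using funpow_cont[OF assms(1,2), of t] by blast
    then show ?thesis using assms(3)[of j] by (metis comp_apply image_subset_iff)
  qed
  have "comp_seq (\<lambda>n. hat f) (Suc t) (muX K X) = hat f (muX K ((f ^^ t) \<circ> X))"
    using Suc.IH by (simp add: comp_def)
  also have "\<dots> = muX K (f \<circ> ((f ^^ t) \<circ> X))" by (rule muX_hat[OF XI meas_I[OF assms(1,2)]])
  finally show ?case by (simp add: o_def)
qed

lemma muX_int:
  fixes \<phi> :: "real \<Rightarrow> real"
  assumes "K \<ge> 1" "\<And>j. X j \<in> unitI" "continuous_on unitI \<phi>"
  shows "(\<integral>x. \<phi> x \<partial>(muX K X)) = (\<Sum>j<K. \<phi> (X j)) / real K"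
proof -
  have "(\<integral>x. \<phi> x \<partial>(muX K X)) = (\<integral>j. \<phi> (X j) \<partial>(measure_pmf (pmf_of_set {..<K})))"
    unfolding muX_def
    by (rule integral_distr[OF muX_meas[OF assms(2)]]) (rule borel_measurable_continuous_on_restrict[OF assms(3)])
  also have "\<dots> = (\<Sum>j<K. \<phi> (X j)) / real K"
  proof -
    have "{..<K} \<noteq> {}" using assms(1) by (simp add: lessThan_empty_iff)
    then show ?thesis by (subst integral_pmf_of_set) auto
  qed
  finally show ?thesis .
qed

definition UU :: "nat \<Rightarrow> nat \<Rightarrow> real set" where
  "UU K s = (if s = 0 then UNIV else {(real s - 2/3) / real K <..}) \<inter>
            (if s = K then UNIV else {..< (real s + 2/3) / real K})"

lemma UU_open: "open (UU K s)"
  unfolding UU_def by (intro open_Int) auto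

lemma UU_sep:
  assumes "K \<ge> 1" "c \<le> K" "s \<le> K" "real c / real K \<in> UU K s"
  shows "c = s"
proof (rule ccontr)
  assume "c \<noteq> s"
  then consider "c < s" | "s < c" by linarith
  then show False
  proof cases
    case 1
    then have "s \<noteq> 0" by auto
    then have "(real s - 2/3) / real K < real c / real K" using assms(4) by (auto simp: UU_def)
    then have "real s - 2/3 < real c" using assms(1) by (simp add: divide_less_cancel)
    moreover have "real c + 1 \<le> real s" using 1 by linarith
    ultimately show False by linarith
  next
    case 2
    then have "s \<noteq> K" using assms by auto
    then have "real c / real K < (real s + 2/3) / real K" using assms(4) by (auto simp: UU_def)
    then have "real c < real s + 2/3" using assms(1) by (simp add: divide_less_cancel)
    moreover have "real s + 1 \<le> real c" using 2 by linarith
    ultimately show False by linarith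
  qed
qed

lemma UU_cover:
  assumes "K \<ge> 1"
  shows "\<exists>s\<le>K. y \<in> UU K s"
proof -
  define S where "S = {s. s \<le> K \<and> (s = 0 \<or> (real s - 2/3) / real K < y)}"
  have fin: "finite S" unfolding S_def by auto
  have "0 \<in> S" unfolding S_def by auto
  then have ne: "S \<noteq> {}" by blast
  define s where "s = Max S"
  have sS: "s \<in> S" unfolding s_def using fin ne by (rule Max_in)
  have smax: "\<And>s'. s' \<in> S \<Longrightarrow> s' \<le> s" unfolding s_def using fin by (rule Max_ge)
  have "s \<le> K" using sS by (simp add: S_def)
  moreover have "y \<in> UU K s"
  proof -
    have left: "s = 0 \<or> (real s - 2/3) / real K < y" using sS by (simp add: S_def)
    have right: "s = K \<or> y < (real s + 2/3) / real K"
    proof (cases "s = K")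
      case False
      then have "s + 1 \<le> K" using \<open>s \<le> K\<close> by auto
      moreover have "s + 1 \<notin> S" using smax by fastforce
      ultimately have "\<not> (real (s+1) - 2/3) / real K < y" unfolding S_def by auto
      then have "y \<le> (real s + 1/3) / real K" by (simp add: field_simps)
      also have "\<dots> < (real s + 2/3) / real K" using assms by (simp add: divide_strict_right_mono)
      finally show ?thesis by blast
    qed simp
    show ?thesis using left right unfolding UU_def by auto
  qed
  ultimately show ?thesis by blast
qed

lemma cover_num_obtain:
  assumes "finite \<U>" "\<Union>\<U> = topspace X"
  shows "\<exists>\<V>\<subseteq>\<U>. finite \<V> \<and> \<Union>\<V> = topspace X \<and> card \<V> = cover_num X \<U>"
  unfolding cover_num_def by (rule LeastI_ex) (use assms in blast)

lemma join_props:
  assumes C: "\<A> \<in> open_covers X" and inv: "\<And>t \<mu>. \<mu> \<in> topspace X \<Longrightarrow> comp_seq g t \<mu> \<in> topspace X"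
  shows "finite (join_pre X g A \<A> n)" "\<Union>(join_pre X g A \<A> n) = topspace X"
proof -
  have fin: "finite \<A>" and un: "\<Union>\<A> = topspace X" using C by (auto simp: open_covers_def)
  define F where "F C = topspace X \<inter> (\<Inter>i<n. comp_seq g (A i) -` C i)" for C
  have "join_pre X g A \<A> n \<subseteq> F ` (PiE {..<n} (\<lambda>_. \<A>))"
  proof
    fix W assume "W \<in> join_pre X g A \<A> n"
    then obtain C where C: "\<forall>i<n. C i \<in> \<A>" "W = F C" by (auto simp: join_pre_def F_def)
    have "restrict C {..<n} \<in> PiE {..<n} (\<lambda>_. \<A>)" using C by auto
    moreover have "F (restrict C {..<n}) = F C" by (simp add: F_def)
    ultimately show "W \<in> F ` (PiE {..<n} (\<lambda>_. \<A>))" using C by (metis image_eqI)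
  qed
  moreover have "finite (F ` (PiE {..<n} (\<lambda>_. \<A>)))" using fin by (simp add: finite_PiE)
  ultimately show "finite (join_pre X g A \<A> n)" by (rule finite_subset)
  show "\<Union>(join_pre X g A \<A> n) = topspace X"
  proof
    show "\<Union>(join_pre X g A \<A> n) \<subseteq> topspace X" by (auto simp: join_pre_def)
    show "topspace X \<subseteq> \<Union>(join_pre X g A \<A> n)"
    proof
      fix \<mu> assume \<mu>: "\<mu> \<in> topspace X"
      have "\<forall>i. \<exists>D. D \<in> \<A> \<and> comp_seq g (A i) \<mu> \<in> D" using inv[OF \<mu>] un by blast
      then obtain C where C: "\<And>i. C i \<in> \<A> \<and> comp_seq g (A i) \<mu> \<in> C i" by metis
      have "\<mu> \<in> topspace X \<inter> (\<Inter>i<n. comp_seq g (A i) -` C i)" using \<mu> C by auto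
      moreover have "topspace X \<inter> (\<Inter>i<n. comp_seq g (A i) -` C i) \<in> join_pre X g A \<A> n"
        unfolding join_pre_def using C by blast
      ultimately show "\<mu> \<in> \<Union>(join_pre X g A \<A> n)" by blast
    qed
  qed
qed

lemma limsup_ge:
  assumes "infinite {n. c \<le> x n}"
  shows "ereal c \<le> limsup (\<lambda>n. ereal (x n))"
  unfolding limsup_INF_SUP le_INF_iff
proof
  fix N :: nat
  obtain n where n: "n \<ge> N" "c \<le> x n" using assms unfolding infinite_nat_iff_unbounded_le by blast
  have "ereal c \<le> ereal (x n)" using n by simp
  also have "\<dots> \<le> (SUP m\<in>{N..}. ereal (x m))" using n by (intro SUP_upper) auto
  finally show "ereal c \<le> (SUP m\<in>{N..}. ereal (x m))" .
qed

lemma pigeon: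
  assumes p: "(p::nat) \<ge> 1"
  shows "\<exists>r<p. infinite {n. n \<le> p * card {i. i < n \<and> A i mod p = r}}"
proof (rule ccontr)
  assume H: "\<not> ?thesis"
  have every: "\<exists>r<p. n \<le> p * card {i. i < n \<and> A i mod p = r}" for n
  proof (rule ccontr)
    assume "\<not> ?thesis"
    then have lt: "\<And>r. r < p \<Longrightarrow> p * card {i. i < n \<and> A i mod p = r} < n" by auto
    have "{..<n} = (\<Union>r\<in>{..<p}. {i. i < n \<and> A i mod p = r})" using p by auto
    moreover have "card (\<Union>r\<in>{..<p}. {i. i < n \<and> A i mod p = r}) =
        (\<Sum>r\<in>{..<p}. card {i. i < n \<and> A i mod p = r})"
      by (rule card_UN_disjoint) auto
    ultimately have "n = (\<Sum>r\<in>{..<p}. card {i. i < n \<and> A i mod p = r})"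
      by (metis card_lessThan)
    then have "p * n = p * (\<Sum>r\<in>{..<p}. card {i. i < n \<and> A i mod p = r})"
      by (rule arg_cong)
    also have "\<dots> = (\<Sum>r\<in>{..<p}. p * card {i. i < n \<and> A i mod p = r})"
      by (rule sum_distrib_left)
    also have "\<dots> < (\<Sum>r\<in>{..<p}. n)" using p lt by (intro sum_strict_mono) (auto simp: lessThan_empty_iff)
    also have "\<dots> = p * n" by simp
    finally show False by simp
  qed
  have "UNIV \<subseteq> (\<Union>r\<in>{..<p}. {n. n \<le> p * card {i. i < n \<and> A i mod p = r}})"
    using every by blast
  moreover have "finite (\<Union>r\<in>{..<p}. {n. n \<le> p * card {i. i < n \<and> A i mod p = r}})"
    using H by auto
  ultimately show False using infinite_UNIV_nat finite_subset by blast
qed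

context
  fixes f :: "real \<Rightarrow> real"
  assumes cont: "continuous_on unitI f" and into: "f ` unitI \<subseteq> unitI"
    and tr: "top_transitive (\<lambda>n. f)"
begin

lemma surj1: "f ` unitI = unitI"
proof (rule ccontr)
  assume ne: "f ` unitI \<noteq> unitI"
  have cl: "closed (f ` unitI)" by (rule compact_imp_closed, rule compact_continuous_image[OF cont]) simp
  define V where "V = unitI \<inter> - (f ` unitI)"
  have "open (- (f ` unitI))" using cl by (simp add: open_Compl)
  then have oV: "openin (top_of_set unitI) V" unfolding V_def openin_open
    by (intro exI[of _ "- (f ` unitI)"]) simp
  have "\<not> unitI \<subseteq> f ` unitI" using ne into by (metis subset_antisym)
  then obtain q where q: "q \<in> unitI" "q \<notin> f ` unitI" by (meson subsetI)
  then have neV: "V \<noteq> {}" unfolding V_def by (metis ComplI IntI empty_iff)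
  have oI: "openin (top_of_set unitI) unitI" by (rule openin_subtopology_self)
  have "unitI \<noteq> {}" by simp
  then obtain n where n: "n \<ge> 1" "(f ^^ n) ` unitI \<inter> V \<noteq> {}"
    using trf[OF cont into tr] oV neV oI unfolding trans_on_def by blast
  have sub: "(f ^^ n) ` unitI \<subseteq> f ` unitI" by (rule funpow_inv[OF subset_refl _ into n(1)]) (rule image_mono[OF into])
  have "V \<inter> f ` unitI = {}" unfolding V_def by (simp add: Int_assoc)
  then show False using n(2) sub by blast
qed

lemma surjn: "(f ^^ n) ` unitI = unitI"
proof (induction n)
  case (Suc n)
  have "(f ^^ Suc n) ` unitI = f ` ((f ^^ n) ` unitI)" by (simp add: image_comp)
  then show ?case using Suc surj1 by simp
qed simp

context
  fixes p :: nat and a0 b0 a1 b1 :: real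
  assumes p: "p \<ge> 1" and hs: "0 \<le> a0" "a0 < b0" "b0 < a1" "a1 < b1" "b1 \<le> 1"
    "{a0..b0} \<union> {a1..b1} \<subseteq> (f ^^ p) ` {a0..b0}" "{a0..b0} \<union> {a1..b1} \<subseteq> (f ^^ p) ` {a1..b1}"
begin

definition JJ :: "bool \<Rightarrow> real set" where "JJ e = (if e then {a1..b1} else {a0..b0})"

lemma JJ_I: "JJ e \<subseteq> unitI" using hs by (auto simp: JJ_def)

lemma JJ_ne: "\<exists>y. y \<in> JJ e" using hs by (auto simp: JJ_def intro: exI[of _ a0] exI[of _ a1])

lemma hs1: "JJ e' \<subseteq> (f ^^ p) ` JJ e"
  using hs by (auto simp: JJ_def)

lemma hs_iter: "m \<ge> 1 \<Longrightarrow> JJ e' \<subseteq> (f ^^ (p*m)) ` JJ e"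
proof (induction m arbitrary: e e' rule: dec_induct)
  case base then show ?case using hs1 by simp
next
  case (step m)
  have "p * Suc m = p*m + p" by simp
  then have "f ^^ (p * Suc m) = f ^^ (p*m) \<circ> f ^^ p"
    by (simp only: funpow_add)
  then have eq: "(f ^^ (p * Suc m)) ` JJ e = (f ^^ (p*m)) ` ((f ^^ p) ` JJ e)"
    by (simp only: image_comp)
  have A: "JJ e' \<subseteq> (f ^^ (p*m)) ` JJ False" by (rule step.IH)
  have C: "(f ^^ (p*m)) ` JJ False \<subseteq> (f ^^ (p*m)) ` ((f ^^ p) ` JJ e)" by (rule image_mono[OF hs1])
  have "JJ e' \<subseteq> (f ^^ (p*m)) ` ((f ^^ p) ` JJ e)" using A C by (rule subset_trans)
  then show ?case by (simp only: eq)
qed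

lemma itin:
  "finite T \<Longrightarrow> \<forall>t\<in>T. t0 < t \<and> p dvd (t - t0) \<Longrightarrow> \<exists>y\<in>JJ e. \<forall>t\<in>T. (f ^^ (t - t0)) y \<in> JJ (\<epsilon> t)"
proof (induction "card T" arbitrary: T t0 e rule: less_induct)
  case less
  show ?case
  proof (cases "T = {}")
    case True then show ?thesis using JJ_ne by auto
  next
    case False
    define t1 where "t1 = Min T"
    have t1T: "t1 \<in> T" using False less.prems by (simp add: t1_def)
    have t1min: "\<And>t. t \<in> T \<Longrightarrow> t1 \<le> t" using less.prems by (simp add: t1_def)
    define T' where "T' = T - {t1}"
    have cardT': "card T' < card T" unfolding T'_def by (rule card_Diff1_less[OF less.prems(1) t1T])
    have "\<forall>t\<in>T'. t1 < t \<and> p dvd (t - t1)"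
    proof
      fix t assume t: "t \<in> T'"
      then have tT: "t \<in> T" and "t \<noteq> t1" by (auto simp: T'_def)
      then have "t1 < t" using t1min[OF tT] by auto
      moreover have "p dvd (t - t0) - (t1 - t0)" by (rule dvd_diff_nat) (use less.prems tT t1T in auto)
      moreover have "(t - t0) - (t1 - t0) = t - t1" using less.prems tT t1T \<open>t1 < t\<close> by auto
      ultimately show "t1 < t \<and> p dvd (t - t1)" by auto
    qed
    moreover have finT': "finite T'" using less.prems by (simp add: T'_def)
    ultimately have "\<exists>y\<in>JJ (\<epsilon> t1). \<forall>t\<in>T'. (f ^^ (t - t1)) y \<in> JJ (\<epsilon> t)"
      using less.hyps[OF cardT' finT'] by blast
    then obtain y' where y': "y' \<in> JJ (\<epsilon> t1)" "\<forall>t\<in>T'. (f ^^ (t - t1)) y' \<in> JJ (\<epsilon> t)"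
      by blast
    have t01: "t0 < t1" "p dvd (t1 - t0)" using less.prems(2) t1T by auto
    obtain m where m: "t1 - t0 = p * m" using t01 by blast
    have m1: "m \<ge> 1" using m t01 by (cases m) auto
    have "JJ (\<epsilon> t1) \<subseteq> (f ^^ (p*m)) ` JJ e" by (rule hs_iter[OF m1])
    then have "y' \<in> (f ^^ (t1 - t0)) ` JJ e" using y'(1) m by auto
    then obtain y where y: "y \<in> JJ e" "(f ^^ (t1 - t0)) y = y'" by auto
    have "\<forall>t\<in>T. (f ^^ (t - t0)) y \<in> JJ (\<epsilon> t)"
    proof
      fix t assume tT: "t \<in> T"
      show "(f ^^ (t - t0)) y \<in> JJ (\<epsilon> t)"
      proof (cases "t = t1")
        case True then show ?thesis using y y' by simp
      next
        case False
        then have tT': "t \<in> T'" using tT by (auto simp: T'_def)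
        have "t - t0 = (t - t1) + (t1 - t0)" using t1min[OF tT] less.prems t1T by auto
        then have "(f ^^ (t - t0)) y = (f ^^ (t - t1)) ((f ^^ (t1 - t0)) y)" by (simp add: funpow_add)
        then show ?thesis using y y' tT' by simp
      qed
    qed
    then show ?thesis using y by blast
  qed
qed

lemma itin0:
  assumes "finite T" "\<forall>t\<in>T. t mod p = r"
  shows "\<exists>x\<in>unitI. \<forall>t\<in>T. (f ^^ t) x \<in> JJ (\<epsilon> t)"
proof (cases "T = {}")
  case True then show ?thesis by auto
next
  case False
  define t0 where "t0 = Min T"
  have t0T: "t0 \<in> T" using False assms by (simp add: t0_def)
  have t0min: "\<And>t. t \<in> T \<Longrightarrow> t0 \<le> t" using assms by (simp add: t0_def)
  have "\<forall>t\<in>T - {t0}. t0 < t \<and> p dvd (t - t0)"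
  proof
    fix t assume t: "t \<in> T - {t0}"
    then have "t0 < t" using t0min[of t] by auto
    moreover have "t mod p = t0 mod p" using assms t t0T by auto
    ultimately show "t0 < t \<and> p dvd (t - t0)" using mod_eq_dvd_iff_nat[of t0 t p] by auto
  qed
  then obtain y where y: "y \<in> JJ (\<epsilon> t0)" "\<forall>t\<in>T - {t0}. (f ^^ (t - t0)) y \<in> JJ (\<epsilon> t)"
    using itin[of "T - {t0}" t0 "\<epsilon> t0" \<epsilon>] assms by auto
  have "y \<in> (f ^^ t0) ` unitI" using surjn JJ_I y by blast
  then obtain x where x: "x \<in> unitI" "(f ^^ t0) x = y" by auto
  have "\<forall>t\<in>T. (f ^^ t) x \<in> JJ (\<epsilon> t)"
  proof
    fix t assume tT: "t \<in> T"
    show "(f ^^ t) x \<in> JJ (\<epsilon> t)"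
    proof (cases "t = t0")
      case True then show ?thesis using x y by simp
    next
      case False
      have "t = (t - t0) + t0" using t0min[OF tT] by auto
      then have "(f ^^ t) x = (f ^^ (t - t0)) ((f ^^ t0) x)" by (metis funpow_add comp_apply)
      then show ?thesis using x y tT False by simp
    qed
  qed
  then show ?thesis using x by blast
qed


definition phi0 :: "real \<Rightarrow> real" where
  "phi0 x = max 0 (min 1 ((x - b0) / (a1 - b0)))"

lemma phi_cont: "continuous_on unitI phi0"
  unfolding phi0_def by (intro continuous_intros) (use hs in auto)

lemma phi_JJ: "x \<in> JJ e \<Longrightarrow> phi0 x = (if e then 1 else 0)"
proof -
  assume x: "x \<in> JJ e"
  have d: "a1 - b0 > 0" using hs by simp
  show ?thesis
  proof (cases e)
    case True
    then have "x \<ge> a1" using x by (simp add: JJ_def)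
    then have "(x - b0) / (a1 - b0) \<ge> 1" using d by (simp add: field_simps)
    then show ?thesis using True by (simp add: phi0_def)
  next
    case False
    then have "x \<le> b0" using x by (simp add: JJ_def)
    then have "(x - b0) / (a1 - b0) \<le> 0" using d by (simp add: divide_nonpos_pos)
    then show ?thesis using False by (simp add: phi0_def)
  qed
qed

definition WW :: "nat \<Rightarrow> nat \<Rightarrow> real measure set" where
  "WW K s = {\<mu>\<in>probI. (\<integral>x. phi0 x \<partial>\<mu>) \<in> UU K s}"

lemma cov_open: "K \<ge> 1 \<Longrightarrow> WW K ` {..K} \<in> open_covers weak_star"
  unfolding open_covers_def
proof (intro CollectI conjI ballI)
  assume K: "K \<ge> 1"
  show "finite (WW K ` {..K})" by simp
  show "openin weak_star U" if "U \<in> WW K ` {..K}" for U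
    using that unfolding WW_def using open_ws[OF phi_cont UU_open] by blast
  show "\<Union> (WW K ` {..K}) = topspace weak_star"
    unfolding topspace_ws WW_def using UU_cover[OF K] by blast
qed

lemma hatf_meas: "f \<in> borelI \<rightarrow>\<^sub>M borelI" by (rule meas_I[OF cont into])

lemma comp_probI: "\<mu> \<in> probI \<Longrightarrow> comp_seq (\<lambda>n. hat f) t \<mu> \<in> probI"
  by (induction t) (auto intro: hat_probI[OF _ hatf_meas])

lemma pat_exists:
  assumes "finite T" "\<forall>t\<in>T. t mod p = r"
  shows "\<exists>X. \<forall>j. X j \<in> unitI \<and> (\<forall>t\<in>T. (f ^^ t) (X j) \<in> JJ (j < c t))"
proof -
  have "\<forall>j. \<exists>x. x \<in> unitI \<and> (\<forall>t\<in>T. (f ^^ t) x \<in> JJ (j < c t))"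
  proof
    fix j
    show "\<exists>x. x \<in> unitI \<and> (\<forall>t\<in>T. (f ^^ t) x \<in> JJ (j < c t))"
      using itin0[OF assms, of "\<lambda>t. j < c t"] by blast
  qed
  then show ?thesis by (rule choice)
qed

lemma pat_int:
  assumes K: "K \<ge> 1" and X: "\<And>j. X j \<in> unitI" and Xt: "\<And>j. (f ^^ t) (X j) \<in> JJ (j < ct)"
    and ct: "ct \<le> K"
  shows "(\<integral>x. phi0 x \<partial>(comp_seq (\<lambda>n. hat f) t (muX K X))) = real ct / real K"
proof -
  have XI: "((f ^^ t) \<circ> X) j \<in> unitI" for j using Xt[of j] JJ_I by (metis comp_apply subsetD)
  have "(\<integral>x. phi0 x \<partial>(comp_seq (\<lambda>n. hat f) t (muX K X))) = (\<integral>x. phi0 x \<partial>(muX K ((f ^^ t) \<circ> X)))"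
    by (simp add: comp_seq_muX[OF cont into X])
  also have "\<dots> = (\<Sum>j<K. phi0 (((f ^^ t) \<circ> X) j)) / real K" by (rule muX_int[OF K XI phi_cont])
  also have "(\<Sum>j<K. phi0 (((f ^^ t) \<circ> X) j)) = (\<Sum>j<K. if j < ct then 1 else 0)"
    by (rule sum.cong) (auto simp: phi_JJ[OF Xt])
  also have "\<dots> = real (card ({..<K} \<inter> {j. j < ct}))" by (simp add: sum.If_cases)
  also have "{..<K} \<inter> {j. j < ct} = {..<ct}" using ct by auto
  finally show ?thesis by simp
qed

lemma count_lb:
  assumes K: "K \<ge> 1" and A: "strict_mono A" and S: "S \<subseteq> {..<n}" and r: "\<forall>i\<in>S. A i mod p = r"
  shows "(K+1) ^ card S \<le> cover_num weak_star (join_pre weak_star (\<lambda>n. hat f) A (WW K ` {..K}) n)"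
proof -
  let ?G = "\<lambda>n::nat. hat f"
  let ?J = "join_pre weak_star ?G A (WW K ` {..K}) n"
  define T where "T = A ` S"
  have finS: "finite S" using S finite_subset by blast
  have finT: "finite T" using finS by (simp add: T_def)
  have cardT: "card T = card S" unfolding T_def
    by (rule card_image) (auto simp: inj_on_def strict_mono_eq[OF A])
  have rT: "\<forall>t\<in>T. t mod p = r" using r by (auto simp: T_def)
  have inv: "\<And>t \<mu>. \<mu> \<in> topspace weak_star \<Longrightarrow> comp_seq ?G t \<mu> \<in> topspace weak_star"
    using comp_probI by (simp add: topspace_ws)
  have jf: "finite ?J" "\<Union>?J = topspace weak_star" using join_props[OF cov_open[OF K] inv] by auto
  obtain V where V: "V \<subseteq> ?J" "finite V" "\<Union>V = topspace weak_star" "card V = cover_num weak_star ?J"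
    using cover_num_obtain[OF jf] by blast
  define P where "P = PiE T (\<lambda>_. {..K})"
  have cardP: "card P = (K+1) ^ card S" unfolding P_def using finT cardT by (simp add: card_PiE)
  have "\<forall>c::nat\<Rightarrow>nat. \<exists>X::nat\<Rightarrow>real. \<forall>j::nat. X j \<in> unitI \<and> (\<forall>t\<in>T. (f ^^ t) (X j) \<in> JJ (j < c t))"
    using pat_exists[OF finT rT] by blast
  from choice[OF this] obtain XX :: "(nat \<Rightarrow> nat) \<Rightarrow> nat \<Rightarrow> real" where XX0: "\<forall>c j. XX c j \<in> unitI \<and> (\<forall>t\<in>T. (f ^^ t) (XX c j) \<in> JJ (j < c t))"
    by blast
  then have XX: "\<And>c j. XX c j \<in> unitI" "\<And>c j t. t \<in> T \<Longrightarrow> (f ^^ t) (XX c j) \<in> JJ (j < c t)"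
    by blast+
  define mu where "mu c = muX K (XX c)" for c
  have mu_top: "mu c \<in> topspace weak_star" for c unfolding mu_def topspace_ws by (rule muX_probI[OF XX(1)])
  have "\<forall>c. \<exists>W. W \<in> V \<and> mu c \<in> W" using mu_top V(3) by blast
  then obtain sel where sel: "\<And>c. sel c \<in> V" "\<And>c. mu c \<in> sel c" by metis
  have val: "(\<integral>x. phi0 x \<partial>(comp_seq ?G t (mu c))) = real (c t) / real K" if "c \<in> P" "t \<in> T" for c t
    unfolding mu_def by (rule pat_int[OF K XX(1) XX(2)[OF that(2)]]) (use that in \<open>auto simp: P_def\<close>)
  have "inj_on sel P"
  proof (rule inj_onI)
    fix c c' assume c: "c \<in> P" and c': "c' \<in> P" and eq: "sel c = sel c'"
    have "sel c \<in> ?J" using sel V by blast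
    then obtain C where C: "\<forall>i<n. C i \<in> WW K ` {..K}" "sel c = topspace weak_star \<inter> (\<Inter>i<n. comp_seq ?G (A i) -` C i)"
      unfolding join_pre_def by blast
    show "c = c'"
    proof (rule PiE_ext[OF c[unfolded P_def] c'[unfolded P_def]])
      fix t assume t: "t \<in> T"
      then obtain i where i: "i \<in> S" "t = A i" by (auto simp: T_def)
      have "i < n" using i S by auto
      then obtain s where s: "s \<le> K" "C i = WW K s" using C by auto
      have "comp_seq ?G t (mu c) \<in> WW K s" using sel(2)[of c] C(2) s \<open>i < n\<close> i by auto
      then have "real (c t) / real K \<in> UU K s" using val[OF c t] by (simp add: WW_def)
      then have cs: "c t = s" using UU_sep[OF K _ s(1)] c t by (auto simp: P_def)
      have "comp_seq ?G t (mu c') \<in> WW K s" using sel(2)[of c'] eq C(2) s \<open>i < n\<close> i by auto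
      then have "real (c' t) / real K \<in> UU K s" using val[OF c' t] by (simp add: WW_def)
      then have "c' t = s" using UU_sep[OF K _ s(1)] c' t by (auto simp: P_def)
      then show "c t = c' t" using cs by simp
    qed
  qed
  then have "card P \<le> card V" by (rule card_inj_on_le) (use sel V in auto)
  then show ?thesis using cardP V(4) by simp
qed

lemma entropy_lb:
  assumes K: "K \<ge> 1" and A: "strict_mono A"
  shows "ereal (ln (real (K+1)) / real p) \<le> seq_entropy weak_star (\<lambda>n. hat f) A"
proof -
  obtain r where r: "r < p" "infinite {n. n \<le> p * card {i. i < n \<and> A i mod p = r}}"
    using pigeon[OF p] by blast
  define L where "L = ln (real (K+1))"
  have L0: "L \<ge> 0" unfolding L_def by simp
  define x where "x n = ln (real (cover_num weak_star (join_pre weak_star (\<lambda>n. hat f) A (WW K ` {..K}) n))) / real n" for n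
  have sub: "{n. n \<le> p * card {i. i < n \<and> A i mod p = r}} - {0} \<subseteq> {n. L / real p \<le> x n}"
  proof
    fix n assume n: "n \<in> {n. n \<le> p * card {i. i < n \<and> A i mod p = r}} - {0}"
    define S where "S = {i. i < n \<and> A i mod p = r}"
    have n1: "n \<ge> 1" and nS: "n \<le> p * card S" using n by (auto simp: S_def)
    define cn where "cn = cover_num weak_star (join_pre weak_star (\<lambda>n. hat f) A (WW K ` {..K}) n)"
    have h: "(K+1) ^ card S \<le> cn" unfolding cn_def
      by (rule count_lb[OF K A, where r=r]) (auto simp: S_def)
    have a0: "(0::nat) < (K+1) ^ card S" by simp
    then have "0 < cn" using h by linarith
    then have p2: "0 < real cn" by simp
    have p1: "0 < real ((K+1) ^ card S)" using a0 by (simp only: of_nat_0_less_iff)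
    have "real ((K+1) ^ card S) \<le> real cn" using h by (simp only: of_nat_le_iff)
    then have "ln (real ((K+1) ^ card S)) \<le> ln (real (cover_num weak_star (join_pre weak_star (\<lambda>n. hat f) A (WW K ` {..K}) n)))"
      unfolding cn_def[symmetric] using ln_le_cancel_iff[OF p1 p2] by blast
    moreover have "ln (real ((K+1) ^ card S)) = real (card S) * L"
      unfolding L_def by (simp add: ln_realpow)
    ultimately have lb: "real (card S) * L \<le> x n * real n" using n1 by (simp add: x_def)
    have "L * real n \<le> L * (real p * real (card S))"
      using nS L0 by (intro mult_left_mono) (simp_all add: of_nat_mult[symmetric] del: of_nat_mult)
    also have "\<dots> = real p * (real (card S) * L)" by simp
    also have "\<dots> \<le> real p * (x n * real n)" using lb p by (intro mult_left_mono) auto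
    finally have "L * real n \<le> real p * (x n * real n)" .
    then have "L / real p \<le> x n" using n1 p by (simp add: field_simps)
    then show "n \<in> {n. L / real p \<le> x n}" by simp
  qed
  moreover have "infinite ({n. n \<le> p * card {i. i < n \<and> A i mod p = r}} - {0})" using r(2) by simp
  ultimately have "infinite {n. L / real p \<le> x n}" using finite_subset by blast
  then have "ereal (L / real p) \<le> limsup (\<lambda>n. ereal (x n))" by (rule limsup_ge)
  also have "\<dots> \<le> seq_entropy weak_star (\<lambda>n. hat f) A"
    unfolding seq_entropy_def x_def by (rule SUP_upper[OF cov_open[OF K]])
  finally show ?thesis by (simp add: L_def)
qed
end
end

lemma part1:
  assumes cont: "continuous_on unitI f" and into: "f ` unitI \<subseteq> unitI"
    and tr: "top_transitive (\<lambda>n. f)" and A: "strict_mono (A :: nat \<Rightarrow> nat)"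
  shows "seq_entropy weak_star (\<lambda>n. hat f) A = \<infinity>"
proof -
  obtain p where p: "p \<ge> 1" "horse_on 0 1 (f ^^ p)" using horse_f[OF cont into tr] by blast
  then obtain a0 b0 a1 b1 where hs: "0 \<le> a0" "a0 < b0" "b0 < a1" "a1 < b1" "b1 \<le> 1"
    "{a0..b0} \<union> {a1..b1} \<subseteq> (f ^^ p) ` {a0..b0}" "{a0..b0} \<union> {a1..b1} \<subseteq> (f ^^ p) ` {a1..b1}"
    unfolding horse_on_def by blast
  show ?thesis
  proof (rule ereal_top)
    fix B :: real
    define K where "K = nat \<lceil>exp (B * real p)\<rceil> + 1"
    have K1: "K \<ge> 1" by (simp add: K_def)
    have "exp (B * real p) \<le> real (nat \<lceil>exp (B * real p)\<rceil>)" by (rule real_nat_ceiling_ge)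
    moreover have "real (K+1) = real (nat \<lceil>exp (B * real p)\<rceil>) + 2" unfolding K_def by simp
    ultimately have e: "exp (B * real p) \<le> real (K+1)" by linarith
    have "B * real p = ln (exp (B * real p))" by simp
    also have "\<dots> \<le> ln (real (K+1))" using e by (subst ln_le_cancel_iff) auto
    finally have "B * real p \<le> ln (real (K+1))" .
    then have "B \<le> ln (real (K+1)) / real p" using p(1) by (simp add: field_simps)
    then have "ereal B \<le> ereal (ln (real (K+1)) / real p)" by simp
    also have "\<dots> \<le> seq_entropy weak_star (\<lambda>n. hat f) A"
      by (rule entropy_lb[OF cont into tr p(1) hs K1 A])
    finally show "ereal B \<le> seq_entropy weak_star (\<lambda>n. hat f) A" .
  qed
qed

theorem theorem5p8:
  shows "(\<forall>f :: real \<Rightarrow> real. continuous_on unitI f \<and> f ` unitI \<subseteq> unitI \<and> top_transitive (\<lambda>n. f)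
            \<longrightarrow> (\<forall>A :: nat \<Rightarrow> nat. strict_mono A \<longrightarrow> seq_entropy weak_star (\<lambda>n. hat f) A = \<infinity>))
       \<and> (\<exists>fs :: nat \<Rightarrow> real \<Rightarrow> real. (\<forall>n. continuous_on unitI (fs n) \<and> fs n ` unitI \<subseteq> unitI)
            \<and> top_transitive fs
            \<and> (\<exists>A :: nat \<Rightarrow> nat. strict_mono A \<and> seq_entropy weak_star (\<lambda>n. hat (fs n)) A = 0))"
  using part1 part2 by blast

end
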